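(* Let $a,b,d$ be positive integers with $d$ not a perfect square, $\alpha=a+b^2\sqrt d$, $N_\alpha=a^2-b^4d$, and $t,u$ positive integers with $\varepsilon=(t+u\sqrt d)/2$ a unit of the ring of integers of $\mathbb{Q}(\sqrt d)$; let $N_\varepsilon=(t^2-du^2)/4$. Define $x_k,y_k\in\mathbb{Q}$ ($k\in\mathbb{Z}$) by $x_k+y_k\sqrt d=\alpha\varepsilon^{2k}$. Suppose $N_\alpha<0$, and let $K$ be the largest negative integer with $y_K>b^2$. (a) With $\overline\alpha=a-b^2\sqrt d$: $y_k>\alpha\varepsilon^{2k}/(2\sqrt d)$ for $k\ge0$, and $y_k>-\overline\alpha\,\varepsilon^{2|k|}/(2\sqrt d)$ for $k<0$. (b) For all $k$, $2y_k$ is a positive integer. The sequences $(y_k)_{k\ge0}$ and $(y_{K+1},y_K,y_{K-1},y_{K-2},\dots)$ are increasing sequences of positive numbers. (c) $y_k\ge \dfrac{|N_\alpha|u^2}{4b^2}\left(\dfrac{2du^2}{5}\right)^{k-1}$ for $k>0$, and $y_k\ge \dfrac{|N_\alpha|u^2}{4b^2}\left(\dfrac{2du^2}{5}\right)^{\max(0,K-k)}$ for $k<0$. Moreover, if $(d,t,u)\ne(5,1,1)$ then $2du^2/5$ may be replaced by $5du^2/8$ in these bounds, and if $N_\varepsilon=1$ it may be replaced by $du^2$. *)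

theory Defs
  imports "HOL-Analysis.Analysis" "HOL-Computational_Algebra.Polynomial"
begin

definition alg_int_unit :: "real \<Rightarrow> bool" where
  "alg_int_unit e \<longleftrightarrow> algebraic_int e \<and> algebraic_int (inverse e)"

end

theory Submission
  imports Defs
begin

lemma mp_of_int_mult:
  "map_poly (of_int :: int \<Rightarrow> real) (p * q) = map_poly of_int p * map_poly of_int q"
  by (rule poly_eqI) (simp add: coeff_map_poly coeff_mult)

lemma mp_of_int_add:
  "map_poly (of_int :: int \<Rightarrow> real) (p + q) = map_poly of_int p + map_poly of_int q"
  by (rule poly_eqI) (simp add: coeff_map_poly)

lemma mp_of_int_smult:
  "map_poly (of_int :: int \<Rightarrow> real) (smult a p) = smult (of_int a) (map_poly of_int p)"
  by (rule poly_eqI) (simp add: coeff_map_poly)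

lemma sqrt_irrat:
  fixes d :: int
  assumes "d > 0" "\<not> (\<exists>m::int. d = m ^ 2)"
  shows "sqrt (real_of_int d) \<notin> \<rat>"
proof
  assume "sqrt (real_of_int d) \<in> \<rat>"
  moreover have "algebraic_int (sqrt (real_of_int d))" by auto
  ultimately have "sqrt (real_of_int d) \<in> \<int>" using rational_algebraic_int_is_int by blast
  then obtain m where m: "sqrt (real_of_int d) = of_int m" by (auto elim: Ints_cases)
  then have "real_of_int d = (of_int m)^2" using assms(1)
    by (metis of_int_0_less_iff less_imp_le real_sqrt_pow2)
  then have "d = m^2" by (metis of_int_eq_iff of_int_power)
  then show False using assms(2) by blast
qed

lemma quad_unit:
  fixes m P :: "int poly" and z :: real
  assumes dm: "degree m = 2" and lP: "lead_coeff P = 1"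
    and zm: "poly (map_poly of_int m) z = 0" and zP: "poly (map_poly of_int P) z = 0"
    and irr: "z \<notin> \<rat>"
  shows "is_unit (lead_coeff (primitive_part m))"
proof -
  have m0: "m \<noteq> 0" using dm by auto
  define r where "r = pseudo_mod P m"
  obtain a q where aq: "a \<noteq> 0" "smult a P = m * q + r"
    using pseudo_mod(1)[OF m0] unfolding r_def by blast
  have rdeg: "r = 0 \<or> degree r < 2" using pseudo_mod(2)[OF m0] dm unfolding r_def by simp
  have "poly (map_poly of_int (smult a P)) z = poly (map_poly of_int (m * q + r)) z"
    using aq by simp
  then have rz: "poly (map_poly (of_int :: int \<Rightarrow> real) r) z = 0"
    using zm zP by (simp add: mp_of_int_mult mp_of_int_add mp_of_int_smult)
  have r0: "r = 0"
  proof (rule ccontr)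
    assume "r \<noteq> 0"
    with rdeg have "degree r \<le> 1" by simp
    then have "poly (map_poly (of_int :: int \<Rightarrow> real) r) z = of_int (coeff r 0) + of_int (coeff r 1) * z"
    proof -
      have "degree r = 0 \<or> degree r = 1" using \<open>degree r \<le> 1\<close> by auto
      then show ?thesis
      proof
        assume "degree r = 0"
        then have "coeff r 1 = 0" by (simp add: coeff_eq_0)
        with \<open>degree r = 0\<close> show ?thesis by (simp add: poly_altdef coeff_map_poly degree_map_poly)
      qed (simp add: poly_altdef coeff_map_poly degree_map_poly)
    qed
    with rz have eq: "of_int (coeff r 0) + of_int (coeff r 1) * z = (0::real)" by simp
    show False
    proof (cases "coeff r 1 = 0")
      case True
      with eq have "coeff r 0 = 0" by simp
      with True \<open>degree r \<le> 1\<close> have "r = 0"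
        by (metis One_nat_def coeff_0 le_Suc_eq le_zero_eq leading_coeff_0_iff)
      with \<open>r \<noteq> 0\<close> show False by simp
    next
      case False
      with eq have "z = - of_int (coeff r 0) / of_int (coeff r 1)"
        by (simp add: field_simps)
      then have "z \<in> \<rat>" by simp
      with irr show False by simp
    qed
  qed
  have cP: "content P = 1"
    using content_dvd_coeff[of P "degree P"] lP is_unit_content_iff[of P] by simp
  have "primitive_part (smult a P) = primitive_part (m * q)" using aq r0 by simp
  then have "smult (unit_factor a) P = primitive_part m * primitive_part q"
    by (simp add: primitive_part_smult primitive_part_mult primitive_part_prim[OF cP])
  then have "lead_coeff (smult (unit_factor a) P) = lead_coeff (primitive_part m) * lead_coeff (primitive_part q)"
    by (simp add: lead_coeff_mult)
  then have "unit_factor a = lead_coeff (primitive_part m) * lead_coeff (primitive_part q)"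
    using lP aq(1) by (simp add: sgn_eq_0_iff)
  then have "lead_coeff (primitive_part m) dvd unit_factor a" by simp
  moreover have "is_unit (unit_factor a)" using aq(1) by simp
  ultimately show ?thesis using dvd_unit_imp_unit by blast
qed

lemma unit_norm:
  fixes d t u :: int
  assumes d: "d > 0" and nonsq: "\<not> (\<exists>m::int. d = m ^ 2)" and u: "u \<noteq> 0"
    and unit: "algebraic_int ((real_of_int t + real_of_int u * sqrt (real_of_int d)) / 2)"
              "algebraic_int (inverse ((real_of_int t + real_of_int u * sqrt (real_of_int d)) / 2))"
  shows "t^2 - d * u^2 = 4 \<or> t^2 - d * u^2 = -4"
proof -
  define s where "s = sqrt (real_of_int d)"
  have sirr: "s \<notin> \<rat>" using sqrt_irrat[OF d nonsq] by (simp add: s_def)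
  have s2: "s^2 = real_of_int d" using d by (simp add: s_def)
  define e where "e = (real_of_int t + real_of_int u * s) / 2"
  have eirr: "e \<notin> \<rat>"
  proof
    assume "e \<in> \<rat>"
    then have "(2 * e - of_int t) / of_int u \<in> \<rat>" by simp
    moreover have "(2 * e - of_int t) / of_int u = s" using u by (simp add: e_def field_simps)
    ultimately show False using sirr by simp
  qed
  then have e0: "e \<noteq> 0" by auto
  define M where "M = t^2 - d * u^2"
  have eq4: "4 * e^2 - 4 * of_int t * e + of_int M = 0"
    unfolding e_def M_def using s2 by (simp add: power2_eq_square field_simps)
  define m4 :: "int poly" where "m4 = [:M, -4*t, 4:]"
  have "poly (map_poly of_int m4) e = 0"
    using eq4 by (simp add: m4_def map_poly_pCons power2_eq_square algebra_simps)
  moreover obtain P where P: "poly (map_poly of_int P) e = 0" "lead_coeff P = 1"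
    using unit(1) unfolding algebraic_int_altdef_ipoly s_def e_def by blast
  moreover have "degree m4 = 2" by (simp add: m4_def)
  ultimately have u4: "is_unit (lead_coeff (primitive_part m4))"
    using quad_unit eirr by blast
  have "lead_coeff m4 = content m4 * lead_coeff (primitive_part m4)"
    by (metis content_times_primitive_part lead_coeff_smult)
  then have "4 = content m4 * lead_coeff (primitive_part m4)" by (simp add: m4_def)
  moreover have "content m4 \<ge> 0" using normalize_content[of m4] by simp
  moreover have "lead_coeff (primitive_part m4) = 1 \<or> lead_coeff (primitive_part m4) = -1"
    using u4 by (simp add: abs_if split: if_splits)
  ultimately have "content m4 = 4" by auto
  moreover have "content m4 dvd coeff m4 0" by (rule content_dvd_coeff)
  ultimately have "4 dvd M" by (simp add: m4_def)
  then obtain n where n: "M = 4 * n" by blast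
  have n0: "n \<noteq> 0"
  proof
    assume "n = 0"
    then have "t^2 = d * u^2" using n by (simp add: M_def)
    then have "real_of_int (t^2) = real_of_int (d * u^2)" by simp
    then have "(real_of_int t)^2 = real_of_int d * (real_of_int u)^2" by simp
    then have "real_of_int d = (of_int t / of_int u)^2" using u
      by (simp add: power_divide)
    then have "s = \<bar>of_int t / of_int u\<bar>" by (simp add: s_def)
    then have "s \<in> \<rat>" by simp
    with sirr show False by simp
  qed
  define m' :: "int poly" where "m' = [:1, -t, n:]"
  have ie: "inverse e \<notin> \<rat>" using eirr by simp
  have "e^2 - of_int t * e + of_int n = 0" using eq4 n by simp
  then have "1 - of_int t * inverse e + of_int n * (inverse e)^2 = 0" using e0
    by (simp add: field_simps power2_eq_square)
  then have "poly (map_poly of_int m') (inverse e) = 0"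
    by (simp add: m'_def map_poly_pCons power2_eq_square algebra_simps)
  moreover obtain P' where P': "poly (map_poly of_int P') (inverse e) = 0" "lead_coeff P' = 1"
    using unit(2) unfolding algebraic_int_altdef_ipoly s_def e_def by blast
  moreover have "degree m' = 2" using n0 by (simp add: m'_def)
  ultimately have u': "is_unit (lead_coeff (primitive_part m'))"
    using quad_unit ie by blast
  have "content m' dvd 1" using content_dvd_coeff[of m' 0] by (simp add: m'_def)
  then have "content m' = 1" using normalize_content[of m'] by simp
  then have "primitive_part m' = m'" by (rule primitive_part_prim)
  with u' have "is_unit n" using n0 by (simp add: m'_def)
  then have "n = 1 \<or> n = -1" by (simp add: abs_if split: if_splits)
  then show ?thesis using n by (auto simp: M_def)
qed

lemma cmp_prev:
  fixes A B F s \<eta> :: real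
  assumes "A > 0" "B > 0" "F > 0" "s > 0" "\<eta> > 1"
  shows "(A * F + B * inverse F) / (2* s) < (A * (F / \<eta>) + B * inverse (F / \<eta>)) / (2* s)
         \<longleftrightarrow> A * F^2 < B * \<eta>"
proof -
  have "(A * F + B * inverse F) / (2* s) < (A * (F / \<eta>) + B * inverse (F / \<eta>)) / (2* s)
        \<longleftrightarrow> A * F + B / F < A * F / \<eta> + B * \<eta> / F"
    using assms by (simp add: divide_less_cancel inverse_eq_divide)
  also have "\<dots> \<longleftrightarrow> (A * F + B / F) * (\<eta> * F) < (A * F / \<eta> + B * \<eta> / F) * (\<eta> * F)"
    using assms by (intro mult_less_cancel_right_pos[symmetric]) auto
  also have "\<dots> \<longleftrightarrow> A * F^2 * \<eta> + B * \<eta> < A * F^2 + B * \<eta>^2"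
  proof -
    have e1: "(A * F + B / F) * (\<eta> * F) = A*F^2*\<eta> + B*\<eta>"
      using assms by (simp add: field_simps power2_eq_square)
    have e2: "(A * F / \<eta> + B * \<eta> / F) * (\<eta> * F) = A*F^2 + B*\<eta>^2"
      using assms by (simp add: field_simps power2_eq_square)
    show ?thesis by (simp only: e1 e2)
  qed
  also have "\<dots> \<longleftrightarrow> (A * F^2) * (\<eta> - 1) < (B * \<eta>) * (\<eta> - 1)"
    by (simp add: algebra_simps power2_eq_square)
  also have "\<dots> \<longleftrightarrow> A * F^2 < B * \<eta>"
    using assms by (intro mult_less_cancel_right_pos) auto
  finally show ?thesis .
qed

lemma cmp_next:
  fixes A B F s \<eta> :: real
  assumes "A > 0" "B > 0" "F > 0" "s > 0" "\<eta> > 1"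
  shows "(A * F + B * inverse F) / (2* s) < (A * (F * \<eta>) + B * inverse (F * \<eta>)) / (2* s)
         \<longleftrightarrow> B < A * F^2 * \<eta>"
proof -
  have "(A * F + B * inverse F) / (2* s) < (A * (F * \<eta>) + B * inverse (F * \<eta>)) / (2* s)
        \<longleftrightarrow> A * F + B / F < A * F * \<eta> + B / (F * \<eta>)"
    using assms by (simp add: divide_less_cancel inverse_eq_divide mult.assoc)
  also have "\<dots> \<longleftrightarrow> (A * F + B / F) * (\<eta> * F) < (A * F * \<eta> + B / (F * \<eta>)) * (\<eta> * F)"
    using assms by (intro mult_less_cancel_right_pos[symmetric]) auto
  also have "\<dots> \<longleftrightarrow> A * F^2 * \<eta> + B * \<eta> < A * F^2 * \<eta>^2 + B"
  proof -
    have e1: "(A * F + B / F) * (\<eta> * F) = A*F^2*\<eta> + B*\<eta>"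
      using assms by (simp add: field_simps power2_eq_square)
    have e2: "(A * F * \<eta> + B / (F * \<eta>)) * (\<eta> * F) = A * F^2 * \<eta>^2 + B"
      using assms by (simp add: field_simps power2_eq_square)
    show ?thesis by (simp only: e1 e2)
  qed
  also have "\<dots> \<longleftrightarrow> B * (\<eta> - 1) < (A * F^2 * \<eta>) * (\<eta> - 1)"
    by (simp add: algebra_simps power2_eq_square)
  also have "\<dots> \<longleftrightarrow> B < A * F^2 * \<eta>"
    using assms by (intro mult_less_cancel_right_pos) auto
  finally show ?thesis .
qed

lemma step_ge:
  fixes A B F s \<eta> c :: real
  assumes "A > 0" "B > 0" "F > 0" "s > 0" "\<eta> > 1"
    and small: "A * F^2 * \<eta> < B" and c: "0 \<le> c" "c \<le> \<eta> - 1 + 1/\<eta>"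
  shows "c * ((A * F + B * inverse F) / (2* s)) \<le> (A * (F / \<eta>) + B * inverse (F / \<eta>)) / (2* s)"
proof -
  have key: "A * F^2 * (c - 1/\<eta>) \<le> B * (\<eta> - c)"
  proof (cases "c \<le> 1/\<eta>")
    case True
    have "A * F^2 * (c - 1/\<eta>) \<le> 0" using True assms by (simp add: mult_nonneg_nonpos)
    moreover have "1/\<eta> < 1" using assms by simp
    then have "c < \<eta>" using True assms by linarith
    then have "B * (\<eta> - c) \<ge> 0" using assms by simp
    ultimately show ?thesis by linarith
  next
    case False
    have "A * F^2 * (c - 1/\<eta>) \<le> (B / \<eta>) * (c - 1/\<eta>)"
      using False small assms by (intro mult_right_mono) (auto simp: field_simps)
    also have "(c - 1/\<eta>) \<le> \<eta> * (\<eta> - c)"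
    proof -
      have "c * (1 + \<eta>) \<le> (\<eta> - 1 + 1/\<eta>) * (1 + \<eta>)"
        using c assms by (intro mult_right_mono) auto
      also have "\<dots> = \<eta>^2 + 1/\<eta>" using assms by (simp add: field_simps power2_eq_square)
      finally show ?thesis by (simp add: algebra_simps power2_eq_square)
    qed
    then have "(B / \<eta>) * (c - 1/\<eta>) \<le> (B / \<eta>) * (\<eta> * (\<eta> - c))"
      using assms by (intro mult_left_mono) auto
    also have "\<dots> = B * (\<eta> - c)" using assms by simp
    finally show ?thesis .
  qed
  have "c * (A * F + B / F) \<le> A * F / \<eta> + B * \<eta> / F"
  proof -
    have e1: "c * (A * F + B / F) * F = c * (A * F^2) + c * B"
      using assms by (simp add: field_simps power2_eq_square)
    have e2: "(A * F / \<eta> + B * \<eta> / F) * F = A * F^2 / \<eta> + B * \<eta>"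
      using assms by (simp add: field_simps power2_eq_square)
    have e3: "A * F^2 * (c - 1/\<eta>) = c * (A * F^2) - A * F^2 / \<eta>"
      by (simp add: algebra_simps)
    have "c * (A * F + B / F) * F \<le> (A * F / \<eta> + B * \<eta> / F) * F"
      unfolding e1 e2 using key e3 by (simp add: algebra_simps)
    then show ?thesis using assms by simp
  qed
  then have "c * (A * F + B / F) / (2* s) \<le> (A * F / \<eta> + B * \<eta> / F) / (2* s)"
    using assms by (intro divide_right_mono) auto
  moreover have "c * ((A * F + B * inverse F) / (2* s)) = c * (A * F + B / F) / (2* s)"
    by (simp add: inverse_eq_divide)
  moreover have "(A * (F / \<eta>) + B * inverse (F / \<eta>)) / (2* s) = (A * F / \<eta> + B * \<eta> / F) / (2* s)"
    by (simp add: inverse_eq_divide)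
  ultimately show ?thesis by (simp only:)
qed

lemma parity_aux:
  fixes T U T1 U1 d :: int
  assumes "T^2 - d * U^2 = 4" "T1^2 - d * U1^2 = 4"
  shows "even (T * T1 + d * U * U1) \<and> even (T * U1 + U * T1)"
proof (cases "even d")
  case True
  have "even (T^2)" using assms(1) True
    by (metis add_diff_cancel_left' diff_add_cancel dvd_add even_mult_iff even_numeral)
  then have eT: "even T" by simp
  have "even (T1^2)" using assms(2) True
    by (metis add_diff_cancel_left' diff_add_cancel dvd_add even_mult_iff even_numeral)
  then have "even T1" by simp
  then show ?thesis using eT True by auto
next
  case False
  have "even (T^2 - d * U^2)" using assms(1) by simp
  then have p1: "even T \<longleftrightarrow> even U" using False by auto
  have "even (T1^2 - d * U1^2)" using assms(2) by simp
  then have p2: "even T1 \<longleftrightarrow> even U1" using False by auto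
  show ?thesis using p1 p2 False by auto
qed

lemma eta_pow_nat:
  fixes d T1 U1 :: int and s \<eta> :: real
  assumes s2: "s^2 = real_of_int d"
    and eta: "\<eta> = (of_int T1 + of_int U1 * s) / 2" "inverse \<eta> = (of_int T1 - of_int U1 * s) / 2"
    and N1: "T1^2 - d * U1^2 = 4"
  shows "\<exists>T U::int. \<eta>^n = (of_int T + of_int U * s) / 2 \<and> (inverse \<eta>)^n = (of_int T - of_int U * s) / 2
                   \<and> T^2 - d * U^2 = 4"
proof (induction n)
  case 0
  show ?case by (rule exI[of _ 2], rule exI[of _ 0]) simp
next
  case (Suc n)
  then obtain T U :: int where TU: "\<eta>^n = (of_int T + of_int U * s) / 2"
    "(inverse \<eta>)^n = (of_int T - of_int U * s) / 2" "T^2 - d * U^2 = 4" by blast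
  obtain P where P: "T * T1 + d * U * U1 = 2 * P" using parity_aux[OF TU(3) N1] by blast
  obtain Q where Q: "T * U1 + U * T1 = 2 * Q" using parity_aux[OF TU(3) N1] by blast
  have "\<eta>^Suc n = \<eta>^n * \<eta>" by (rule power_Suc2)
  also have "\<dots> = (of_int T + of_int U * s) / 2 * ((of_int T1 + of_int U1 * s) / 2)"
    by (subst TU(1), subst eta(1), rule refl)
  also have "\<dots> = (of_int (T * T1 + d * U * U1) + of_int (T * U1 + U * T1) * s) / 4"
    by (simp add: s2[symmetric] field_simps power2_eq_square)
  also have "\<dots> = (of_int P + of_int Q * s) / 2" unfolding P Q by simp
  finally have 1: "\<eta>^Suc n = (of_int P + of_int Q * s) / 2" .
  have "(inverse \<eta>)^Suc n = (inverse \<eta>)^n * inverse \<eta>" by (rule power_Suc2)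
  also have "\<dots> = (of_int T - of_int U * s) / 2 * ((of_int T1 - of_int U1 * s) / 2)"
    by (subst TU(2), subst eta(2), rule refl)
  also have "\<dots> = (of_int (T * T1 + d * U * U1) - of_int (T * U1 + U * T1) * s) / 4"
    by (simp add: s2[symmetric] field_simps power2_eq_square)
  also have "\<dots> = (of_int P - of_int Q * s) / 2" unfolding P Q by simp
  finally have 2: "(inverse \<eta>)^Suc n = (of_int P - of_int Q * s) / 2" .
  have "4 * (P^2 - d * Q^2) = (T * T1 + d * U * U1)^2 - d * (T * U1 + U * T1)^2"
    unfolding P Q by (simp add: algebra_simps power2_eq_square)
  also have "\<dots> = (T^2 - d * U^2) * (T1^2 - d * U1^2)"
    by (simp add: algebra_simps power2_eq_square)
  finally have "P^2 - d * Q^2 = 4" using TU(3) N1 by simp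
  with 1 2 show ?case by blast
qed

lemma eta_pow_int:
  fixes d T1 U1 :: int and s \<eta> :: real
  assumes s2: "s^2 = real_of_int d"
    and eta: "\<eta> = (of_int T1 + of_int U1 * s) / 2" "inverse \<eta> = (of_int T1 - of_int U1 * s) / 2"
    and N1: "T1^2 - d * U1^2 = 4"
  shows "\<exists>T U::int. \<eta> powi k = (of_int T + of_int U * s) / 2 \<and>
                   inverse (\<eta> powi k) = (of_int T - of_int U * s) / 2"
proof (cases "k \<ge> 0")
  case True
  obtain T U :: int where TU: "\<eta>^nat k = (of_int T + of_int U * s) / 2"
    "(inverse \<eta>)^nat k = (of_int T - of_int U * s) / 2"
    using eta_pow_nat[OF assms, of "nat k"] by blast
  have "\<eta> powi k = \<eta>^nat k" using True by (simp add: power_int_nonneg_exp)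
  moreover have "inverse (\<eta> powi k) = (inverse \<eta>)^nat k"
    using True by (simp add: power_int_nonneg_exp power_inverse)
  ultimately show ?thesis using TU by auto
next
  case False
  obtain T U :: int where TU: "\<eta>^nat (-k) = (of_int T + of_int U * s) / 2"
    "(inverse \<eta>)^nat (-k) = (of_int T - of_int U * s) / 2"
    using eta_pow_nat[OF assms, of "nat (-k)"] by blast
  have 1: "\<eta> powi k = (inverse \<eta>)^nat (-k)" using False by (simp add: power_int_def)
  have 2: "inverse (\<eta> powi k) = \<eta>^nat (-k)" unfolding 1 by (simp add: power_inverse)
  have 3: "(of_int T + of_int (-U) * s) / 2 = (of_int T - of_int U * s) / (2::real)" by simp
  have 4: "(of_int T - of_int (-U) * s) / 2 = (of_int T + of_int U * s) / (2::real)" by simp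
  have 5: "\<eta> powi k = (of_int T + of_int (-U) * s) / 2" unfolding 3 1 TU(2) ..
  have 6: "inverse (\<eta> powi k) = (of_int T - of_int (-U) * s) / 2" unfolding 4 2 TU(1) ..
  show ?thesis using 5 6 by blast
qed

lemma rat_coeff_eq:
  fixes p q p2 q2 s :: real
  assumes "p \<in> \<rat>" "q \<in> \<rat>" "p2 \<in> \<rat>" "q2 \<in> \<rat>" "s \<notin> \<rat>" "p + q * s = p2 + q2 * s"
  shows "q = q2"
proof (rule ccontr)
  assume ne: "q \<noteq> q2"
  have "(q - q2) * s = p2 - p" using assms(6) by (simp add: algebra_simps)
  then have "s = (p2 - p) / (q - q2)" using ne by (simp add: field_simps)
  then have "s \<in> \<rat>" using assms(1-4) by simp
  with assms(5) show False by simp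
qed

lemma sq_b2s:
  fixes s :: real assumes s2: "s^2 = real_of_int d"
  shows "(real_of_int (b^2) * s)^2 = real_of_int (b^4 * d)"
proof -
  have "(real_of_int (b^2) * s)^2 = real_of_int ((b^2)^2) * real_of_int d"
    by (simp only: power_mult_distrib s2 of_int_power)
  also have "(b^2)^2 = b^4" by (simp add: power_mult[symmetric])
  finally show ?thesis by simp
qed

theorem lemma3p5:
  fixes a b d t u :: int and x y :: "int \<Rightarrow> real"
  assumes pos: "a > 0" "b > 0" "d > 0" "t > 0" "u > 0"
    and nonsq: "\<not> (\<exists>m::int. d = m ^ 2)"
    and unit: "alg_int_unit ((real_of_int t + real_of_int u * sqrt (real_of_int d)) / 2)"
    and xy: "\<And>k. x k \<in> \<rat> \<and> y k \<in> \<rat> \<and>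
              x k + y k * sqrt (real_of_int d) =
              (real_of_int a + real_of_int (b^2) * sqrt (real_of_int d)) *
              ((real_of_int t + real_of_int u * sqrt (real_of_int d)) / 2) powi (2 * k)"
    and Nneg: "a^2 - b^4 * d < 0"
  shows
    \<comment> \<open>(a)\<close>
    "(\<forall>k\<ge>0. y k > (real_of_int a + real_of_int (b^2) * sqrt (real_of_int d)) *
                 ((real_of_int t + real_of_int u * sqrt (real_of_int d)) / 2) powi (2 * k)
                 / (2 * sqrt (real_of_int d))) \<and>
     (\<forall>k<0. y k > - (real_of_int a - real_of_int (b^2) * sqrt (real_of_int d)) *
                 ((real_of_int t + real_of_int u * sqrt (real_of_int d)) / 2) powi (2 * \<bar>k\<bar>)
                 / (2 * sqrt (real_of_int d))) \<and>
    \<comment> \<open>(b)\<close>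
     (\<forall>k. 2 * y k \<in> \<int> \<and> 2 * y k > 0) \<and>
     (\<forall>k\<ge>0. y k < y (k + 1)) \<and>
    \<comment> \<open>(c), first half: k > 0\<close>
     (\<forall>c::real. (c = 2 * d * u^2 / 5
                  \<or> ((d, t, u) \<noteq> (5, 1, 1) \<and> c = 5 * d * u^2 / 8)
                  \<or> ((real_of_int t ^ 2 - real_of_int d * real_of_int u ^ 2) / 4 = 1 \<and> c = d * u^2)) \<longrightarrow>
        (\<forall>k>0. y k \<ge> \<bar>real_of_int (a^2 - b^4 * d)\<bar> * u^2 / (4 * b^2) * c ^ nat (k - 1))) \<and>
    \<comment> \<open>parts involving K, the largest negative integer with y K > b^2\<close>
     (\<forall>K. K < 0 \<and> y K > b^2 \<and> (\<forall>k<0. y k > b^2 \<longrightarrow> k \<le> K) \<longrightarrow>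
        (\<forall>k\<le>K + 1. y k < y (k - 1)) \<and>
        (\<forall>c::real. (c = 2 * d * u^2 / 5
                  \<or> ((d, t, u) \<noteq> (5, 1, 1) \<and> c = 5 * d * u^2 / 8)
                  \<or> ((real_of_int t ^ 2 - real_of_int d * real_of_int u ^ 2) / 4 = 1 \<and> c = d * u^2)) \<longrightarrow>
          (\<forall>k<0. y k \<ge> \<bar>real_of_int (a^2 - b^4 * d)\<bar> * u^2 / (4 * b^2) * c ^ nat (max 0 (K - k)))))"
proof -
  define s where "s = sqrt (real_of_int d)"
  have s0: "s > 0" using pos by (simp add: s_def)
  have s2: "s^2 = real_of_int d" using pos by (simp add: s_def)
  have sirr: "s \<notin> \<rat>" unfolding s_def by (rule sqrt_irrat[OF pos(3) nonsq])
  define e where "e = (real_of_int t + real_of_int u * s) / 2"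
  have tn: "t^2 - d*u^2 = 4 \<or> t^2 - d*u^2 = -4"
    using unit_norm[OF pos(3) nonsq] unit pos(5) unfolding alg_int_unit_def by auto
  obtain nn :: int where nn: "t^2 - d*u^2 = 4*nn" "nn = 1 \<or> nn = -1"
  proof (cases "t^2 - d*u^2 = 4")
    case True then show ?thesis using that[of 1] by simp
  next
    case False then show ?thesis using that[of "-1"] tn by simp
  qed
  have nn2: "nn^2 = 1" using nn(2) by auto
  define m :: int where "m = d * u^2"
  have m0: "m > 0" using pos by (simp add: m_def)
  have tsq: "t^2 = m + 4*nn" using nn(1) by (simp add: m_def)
  have rtsq: "(real_of_int t)^2 = real_of_int m + 4 * real_of_int nn"
    using arg_cong[OF tsq, of real_of_int] by simp
  have rm: "real_of_int m = s^2 * (real_of_int u)^2" by (simp add: m_def s2)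
  have m5: "m \<ge> 5"
  proof (cases "nn = 1")
    case True
    then have "t^2 > 4" using tsq m0 by simp
    then have "t \<ge> 3"
    proof -
      { assume "t \<le> 2"
        then have "t^2 \<le> 2^2" using pos(4) by (intro power_mono) auto
        then have False using \<open>t^2 > 4\<close> by simp }
      then show ?thesis by force
    qed
    then have "t^2 \<ge> 3^2" by (intro power_mono) auto
    then show ?thesis using tsq True by simp
  next
    case False
    then have "nn = -1" using nn(2) by simp
    have "t^2 \<ge> 1" using pos(4) by (simp add: one_le_power)
    then show ?thesis using tsq \<open>nn = -1\<close> by simp
  qed
  define T1 :: int where "T1 = m + 2 * nn"
  define U1 :: int where "U1 = t * u"
  have N1: "T1^2 - d * U1^2 = 4"
  proof -
    have "T1^2 - d * U1^2 = (m + 2*nn)^2 - m * t^2"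
      by (simp add: T1_def U1_def m_def power_mult_distrib algebra_simps)
    also have "\<dots> = (m + 2*nn)^2 - m * (m + 4*nn)" by (simp add: tsq)
    also have "\<dots> = 4 * nn^2" by (simp add: algebra_simps power2_eq_square)
    finally show ?thesis using nn2 by simp
  qed
  define \<eta> where "\<eta> = e^2"
  have eta1: "\<eta> = (of_int T1 + of_int U1 * s) / 2"
  proof -
    have "\<eta> = ((real_of_int t)^2 + 2 * real_of_int t * real_of_int u * s + (real_of_int u)^2 * s^2) / 4"
      by (simp add: \<eta>_def e_def power2_eq_square field_simps)
    also have "\<dots> = (2 * real_of_int m + 4 * real_of_int nn + 2 * real_of_int t * real_of_int u * s) / 4"
      using rtsq rm by (simp add: algebra_simps)
    also have "\<dots> = (of_int T1 + of_int U1 * s) / 2"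
      by (simp add: T1_def U1_def field_simps)
    finally show ?thesis .
  qed
  have eta2: "inverse \<eta> = (of_int T1 - of_int U1 * s) / 2"
  proof -
    have "\<eta> * ((of_int T1 - of_int U1 * s) / 2) = ((of_int T1)^2 - (of_int U1)^2 * s^2) / 4"
      unfolding eta1 by (simp add: field_simps power2_eq_square)
    also have "\<dots> = real_of_int (T1^2 - d * U1^2) / 4" by (simp add: s2)
    also have "\<dots> = 1" using N1 by simp
    finally have "\<eta> * ((of_int T1 - of_int U1 * s) / 2) = 1" .
    then show ?thesis by (rule inverse_unique)
  qed
  have e0: "e > 0" using pos s0 by (simp add: e_def add_pos_pos)
  have etapos: "\<eta> > 0" using e0 by (simp add: \<eta>_def)
  have etadiff: "\<eta> - inverse \<eta> = of_int t * of_int u * s"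
    using eta1 eta2 by (simp add: U1_def field_simps)
  have etasum: "\<eta> + inverse \<eta> = of_int m + 2 * of_int nn"
    using eta1 eta2 by (simp add: T1_def field_simps)
  have eta_gt1: "\<eta> > 1"
  proof (rule ccontr)
    assume "\<not> \<eta> > 1"
    then have "inverse \<eta> \<ge> 1" using etapos by (simp add: one_le_inverse)
    moreover have "of_int t * of_int u * s > 0" using pos s0 by simp
    ultimately show False using etadiff \<open>\<not> \<eta> > 1\<close> by linarith
  qed
  define A where "A = real_of_int a + real_of_int (b^2) * s"
  define B where "B = real_of_int (b^2) * s - real_of_int a"
  have B0: "B > 0"
  proof -
    have h1: "real_of_int (a^2) < real_of_int (b^4 * d)" unfolding of_int_less_iff using Nneg by simp
    have h2: "(real_of_int (b^2) * s)^2 = real_of_int (b^4 * d)" by (rule sq_b2s[OF s2])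
    have h3: "(real_of_int a)^2 = real_of_int (a^2)" by (simp only: of_int_power)
    have "(real_of_int a)^2 < (real_of_int (b^2) * s)^2" using h1 h2 h3 by linarith
    moreover have "0 \<le> real_of_int (b^2) * s" using s0 by simp
    ultimately have "real_of_int a < real_of_int (b^2) * s"
      by (rule power_less_imp_less_base)
    then show ?thesis by (simp add: B_def)
  qed
  have AB: "A > B" using pos by (simp add: A_def B_def)
  have A0: "A > 0" using AB B0 by simp
  have ABprod: "A * B = \<bar>real_of_int (a^2 - b^4 * d)\<bar>"
  proof -
    have "A * B = (real_of_int (b^2) * s)^2 - (real_of_int a)^2"
      by (simp only: A_def B_def) (simp add: algebra_simps power2_eq_square)
    also have "\<dots> = real_of_int (b^4 * d) - real_of_int (a^2)"
      by (simp only: sq_b2s[OF s2] of_int_power[symmetric])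
    also have "\<dots> = real_of_int (b^4 * d - a^2)" by (simp only: of_int_diff)
    also have "\<dots> = real_of_int \<bar>a^2 - b^4 * d\<bar>" using Nneg by (simp only: abs_of_neg)
    also have "\<dots> = \<bar>real_of_int (a^2 - b^4 * d)\<bar>" by (simp only: of_int_abs)
    finally show ?thesis .
  qed
  define F where "F = (\<lambda>k::int. \<eta> powi k)"
  have Fpos: "F k > 0" for k using etapos by (simp add: F_def)
  have Fsuc: "F (k + 1) = F k * \<eta>" for k
    using etapos by (simp add: F_def power_int_add_1)
  have Fpred: "F (k - 1) = F k / \<eta>" for k
    using Fsuc[of "k - 1"] etapos by (simp add: field_simps)
  have Fmono: "j \<le> k \<Longrightarrow> F j \<le> F k" for j k
    using eta_gt1 by (simp add: F_def power_int_increasing)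
  have F0: "F 0 = 1" by (simp add: F_def)
  have epow: "e powi (2 * k) = F k" for k
    by (simp add: F_def \<eta>_def power_int_mult)
  have yf: "y k = (A * F k + B * inverse (F k)) / (2 * s) \<and> 2 * y k \<in> \<int>" for k
  proof -
    obtain T U :: int where TU: "\<eta> powi k = (of_int T + of_int U * s) / 2"
      "inverse (\<eta> powi k) = (of_int T - of_int U * s) / 2"
      using eta_pow_int[OF s2 eta1 eta2 N1, of k] by blast
    have xyk: "x k \<in> \<rat>" "y k \<in> \<rat>" "x k + y k * s = A * e powi (2 * k)"
      using xy[of k, folded s_def, folded e_def, folded A_def] by auto
    define X where "X = (real_of_int a * of_int T + real_of_int (b^2) * of_int d * of_int U) / 2"
    define Y where "Y = (real_of_int a * of_int U + real_of_int (b^2) * of_int T) / 2"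
    have "A * e powi (2 * k) = A * ((of_int T + of_int U * s) / 2)"
      using TU(1) by (simp add: epow F_def)
    also have "\<dots> = X + Y * s"
      by (simp add: A_def X_def Y_def s2[symmetric] field_simps power2_eq_square)
    finally have "x k + y k * s = X + Y * s" using xyk(3) by simp
    moreover have "X \<in> \<rat>" "Y \<in> \<rat>" by (simp_all add: X_def Y_def)
    ultimately have yY: "y k = Y" using rat_coeff_eq xyk(1,2) sirr by blast
    have "A * F k + B * inverse (F k) = A * ((of_int T + of_int U * s) / 2) + B * ((of_int T - of_int U * s) / 2)"
      unfolding F_def by (subst TU(2), subst TU(1), rule refl)
    also have "\<dots> = 2 * s * Y"
      by (simp add: A_def B_def Y_def field_simps)
    finally have "y k = (A * F k + B * inverse (F k)) / (2 * s)" using yY s0 by simp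
    moreover have "2 * y k = of_int (a * U + b^2 * T)" using yY by (simp add: Y_def)
    ultimately show ?thesis by simp
  qed
  have yform: "y k = (A * F k + B * inverse (F k)) / (2 * s)" for k using yf by blast
  have ypos: "y k > 0" for k
  proof -
    have "A * F k + B * inverse (F k) > 0" using A0 B0 Fpos[of k] by (simp add: add_pos_pos)
    then show ?thesis using yform[of k] s0 by simp
  qed
  have yprev: "y (k - 1) = (A * (F k / \<eta>) + B * inverse (F k / \<eta>)) / (2 * s)" for k
    using yform[of "k - 1"] Fpred[of k] by simp
  have ynext: "y (k + 1) = (A * (F k * \<eta>) + B * inverse (F k * \<eta>)) / (2 * s)" for k
    using yform[of "k + 1"] Fsuc[of k] by simp
  have dec_iff: "y k < y (k - 1) \<longleftrightarrow> A * (F k)^2 < B * \<eta>" for k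
    unfolding yprev[of k] yform[of k] by (rule cmp_prev[OF A0 B0 Fpos s0 eta_gt1])
  have P1: "\<forall>k\<ge>0. y k > A * e powi (2 * k) / (2 * s)"
  proof (intro allI impI)
    fix k :: int assume "k \<ge> 0"
    have "B * inverse (F k) > 0" using B0 Fpos[of k] by simp
    then have "A * F k / (2* s) < (A * F k + B * inverse (F k)) / (2* s)"
      using s0 by (intro divide_strict_right_mono) auto
    then show "y k > A * e powi (2 * k) / (2 * s)" using yform[of k] epow[of k] by simp
  qed
  have P2: "\<forall>k<0. y k > - (real_of_int a - real_of_int (b^2) * s) * e powi (2 * \<bar>k\<bar>) / (2 * s)"
  proof (intro allI impI)
    fix k :: int assume "k < 0"
    have "e powi (2 * \<bar>k\<bar>) = F (-k)" using epow[of "-k"] \<open>k < 0\<close> by simp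
    also have "\<dots> = inverse (F k)" by (simp add: F_def power_int_minus)
    finally have 1: "e powi (2 * \<bar>k\<bar>) = inverse (F k)" .
    have 2: "- (real_of_int a - real_of_int (b^2) * s) = B" by (simp add: B_def)
    have "A * F k > 0" using A0 Fpos[of k] by simp
    then have "B * inverse (F k) / (2* s) < (A * F k + B * inverse (F k)) / (2* s)"
      using s0 by (intro divide_strict_right_mono) auto
    then show "y k > - (real_of_int a - real_of_int (b^2) * s) * e powi (2 * \<bar>k\<bar>) / (2 * s)"
      unfolding 1 2 using yform[of k] by simp
  qed
  have P3: "\<forall>k. 2 * y k \<in> \<int> \<and> 2 * y k > 0"
  proof
    fix k show "2 * y k \<in> \<int> \<and> 2 * y k > 0" using yf[of k] ypos[of k] by linarith
  qed
  have P4: "\<forall>k\<ge>0. y k < y (k + 1)"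
  proof (intro allI impI)
    fix k :: int assume "k \<ge> 0"
    have F1: "F k \<ge> 1" using Fmono[OF \<open>k \<ge> 0\<close>] F0 by simp
    then have "(F k)^2 \<ge> 1" by (simp add: one_le_power)
    then have "(F k)^2 * \<eta> \<ge> 1 * \<eta>" using etapos by (intro mult_right_mono) auto
    then have "(F k)^2 * \<eta> > 1" using eta_gt1 by linarith
    then have "A * 1 < A * ((F k)^2 * \<eta>)" using A0 by (intro mult_strict_left_mono) auto
    then have "B < A * (F k)^2 * \<eta>" using AB by (simp add: mult.assoc)
    then show "y k < y (k + 1)"
      unfolding ynext[of k] yform[of k] by (rule cmp_next[OF A0 B0 Fpos s0 eta_gt1, THEN iffD2])
  qed
  have inv1: "1 / \<eta> = inverse \<eta>" by (simp add: inverse_eq_divide)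
  have tus: "real_of_int t * real_of_int u * s \<ge> 2" if "nn = -1"
  proof -
    have "(real_of_int u * s)^2 = real_of_int m" using rm by (simp add: power_mult_distrib)
    then have h22: "2^2 \<le> (real_of_int u * s)^2" using m5 by simp
    have hnn: "0 \<le> real_of_int u * s" using pos s0 by simp
    have us2: "2 \<le> real_of_int u * s" by (rule power2_le_imp_le[OF h22 hnn])
    have "real_of_int t \<ge> 1" using pos by simp
    then have "real_of_int t * (real_of_int u * s) \<ge> 1 * (real_of_int u * s)"
      using us2 by (intro mult_right_mono) auto
    then show ?thesis using us2 by (simp add: mult.assoc)
  qed
  have eta_m: "\<eta> \<ge> real_of_int m / 2"
  proof -
    have "\<eta> = (real_of_int m + 2 * real_of_int nn + real_of_int t * real_of_int u * s) / 2"
      using eta1 by (simp add: T1_def U1_def)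
    moreover have "real_of_int t * real_of_int u * s > 0" using pos s0 by simp
    ultimately show ?thesis using nn(2) tus by auto
  qed
  have d2: "d \<ge> 2"
  proof -
    have "d \<noteq> 1" using nonsq by (metis power_one)
    then show ?thesis using pos(3) by simp
  qed
  have cfacts: "0 \<le> c \<and> c \<le> \<eta> - 1 + 1 / \<eta> \<and> c \<le> \<eta>"
    if cond: "c = 2 * d * u^2 / 5
                  \<or> ((d, t, u) \<noteq> (5, 1, 1) \<and> c = 5 * d * u^2 / 8)
                  \<or> ((real_of_int t ^ 2 - real_of_int d * real_of_int u ^ 2) / 4 = 1 \<and> c = d * u^2)" for c :: real
  proof -
    have hs: "\<eta> - 1 + 1 / \<eta> = real_of_int m + 2 * real_of_int nn - 1" using etasum inv1 by simp
    have rm5: "real_of_int m \<ge> 5" using m5 by simp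
    have main: "0 \<le> c \<and> c \<le> real_of_int m + 2 * real_of_int nn - 1"
    proof -
      consider (c1) "c = 2 * d * u^2 / 5" | (c2) "(d, t, u) \<noteq> (5, 1, 1)" "c = 5 * d * u^2 / 8"
        | (c3) "(real_of_int t ^ 2 - real_of_int d * real_of_int u ^ 2) / 4 = 1" "c = d * u^2"
        using cond by blast
      then show ?thesis
      proof cases
        case c1
        then have "c = 2 * real_of_int m / 5" by (simp add: m_def)
        then show ?thesis using rm5 nn(2) by auto
      next
        case c2
        then have cm: "c = 5 * real_of_int m / 8" by (simp add: m_def)
        show ?thesis
        proof (cases "nn = 1")
          case True then show ?thesis using cm rm5 by simp
        next
          case False
          then have nm: "nn = -1" using nn(2) by simp
          have "m \<ge> 8"
          proof (cases "t = 1")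
            case True
            then have m5': "d * u^2 = 5" using tsq nm by (simp add: m_def)
            have "u = 1"
            proof (rule ccontr)
              assume "u \<noteq> 1"
              then have "u \<ge> 2" using pos(5) by simp
              then have "u^2 \<ge> 2^2" by (intro power_mono) auto
              then have "d * u^2 \<ge> 2 * 4" using d2 by (intro mult_mono) auto
              then show False using m5' by simp
            qed
            then have "d = 5" using m5' by simp
            then show ?thesis using c2 True \<open>u = 1\<close> by simp
          next
            case False
            then have "t \<ge> 2" using pos(4) by simp
            then have "t^2 \<ge> 2^2" by (intro power_mono) auto
            then show ?thesis using tsq nm by simp
          qed
          then show ?thesis using cm nm by simp
        qed
      next
        case c3
        then have "real_of_int (t^2 - d * u^2) = 4" by simp
        then have "t^2 - d * u^2 = 4" by linarith
        then have "nn = 1" using nn(1) by simp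
        moreover have "c = real_of_int m" using c3 by (simp add: m_def)
        ultimately show ?thesis using rm5 by simp
      qed
    qed
    have "1 / \<eta> < 1" using eta_gt1 by simp
    then show ?thesis using main hs by linarith
  qed
  define Q where "Q = \<bar>real_of_int (a^2 - b^4 * d)\<bar> * u^2 / (4 * b^2)"
  have Qeq: "Q = A * B * (real_of_int u)^2 / (4 * (real_of_int b)^2)"
    by (simp add: Q_def ABprod)
  have A2: "A < 2 * real_of_int (b^2) * s" using B0 by (simp add: A_def B_def mult.commute)
  have Bb: "B < real_of_int (b^2) * s" using pos by (simp add: B_def)
  have P5: "\<forall>c::real. (c = 2 * d * u^2 / 5
                  \<or> ((d, t, u) \<noteq> (5, 1, 1) \<and> c = 5 * d * u^2 / 8)
                  \<or> ((real_of_int t ^ 2 - real_of_int d * real_of_int u ^ 2) / 4 = 1 \<and> c = d * u^2)) \<longrightarrow>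
        (\<forall>k>0. y k \<ge> Q * c ^ nat (k - 1))"
  proof (intro allI impI)
    fix c :: real and k :: int
    assume cond: "c = 2 * d * u^2 / 5
                  \<or> ((d, t, u) \<noteq> (5, 1, 1) \<and> c = 5 * d * u^2 / 8)
                  \<or> ((real_of_int t ^ 2 - real_of_int d * real_of_int u ^ 2) / 4 = 1 \<and> c = d * u^2)"
      and "k > 0"
    have cf: "0 \<le> c" "c \<le> \<eta>" using cfacts[OF cond] by auto
    define C where "C = c ^ nat (k - 1)"
    have C0: "C \<ge> 0" using cf by (simp add: C_def)
    have "F k = \<eta> * \<eta> ^ nat (k - 1)"
    proof -
      have "F k = \<eta> ^ nat k" using \<open>k > 0\<close> by (simp add: F_def power_int_nonneg_exp)
      also have "nat k = Suc (nat (k - 1))" using \<open>k > 0\<close> by simp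
      finally show ?thesis by simp
    qed
    moreover have "\<eta> ^ nat (k - 1) \<ge> C" unfolding C_def using cf by (intro power_mono) auto
    ultimately have "F k \<ge> \<eta> * C" using etapos by simp
    moreover have "\<eta> * C \<ge> real_of_int m / 2 * C" using eta_m C0 by (intro mult_right_mono) auto
    ultimately have FkC: "F k \<ge> real_of_int m / 2 * C" by linarith
    have "Q * C = A * B * (real_of_int u)^2 / (4 * (real_of_int b)^2) * C" by (simp add: Qeq)
    also have "\<dots> \<le> A * (real_of_int (b^2) * s) * (real_of_int u)^2 / (4 * (real_of_int b)^2) * C"
      using Bb A0 C0 pos by (intro mult_right_mono divide_right_mono mult_left_mono) auto
    also have "\<dots> = A * (real_of_int m / 2 * C) / (2 * s)"
      using pos s0 by (simp add: rm field_simps power2_eq_square)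
    also have "\<dots> \<le> A * F k / (2 * s)"
      using FkC A0 s0 by (intro divide_right_mono mult_left_mono) auto
    also have "\<dots> < y k"
    proof -
      have "A * e powi (2 * k) / (2 * s) < y k" using P1 \<open>k > 0\<close> by simp
      then show ?thesis unfolding epow[of k] .
    qed
    finally show "y k \<ge> Q * c ^ nat (k - 1)" by (simp add: C_def)
  qed
  have y0: "y 0 = real_of_int (b^2)"
  proof -
    have "y 0 = (A + B) / (2 * s)" using yform[of 0] F0 by simp
    also have "A + B = 2 * real_of_int (b^2) * s" by (simp add: A_def B_def)
    finally show ?thesis using s0 by simp
  qed
  have ABr: "A * B = real_of_int (b^4 * d) - real_of_int (a^2)"
  proof -
    have "A * B = (real_of_int (b^2) * s)^2 - (real_of_int a)^2"
      by (simp only: A_def B_def) (simp add: algebra_simps power2_eq_square)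
    also have "\<dots> = real_of_int (b^4 * d) - real_of_int (a^2)"
      by (simp only: sq_b2s[OF s2] of_int_power[symmetric])
    finally show ?thesis .
  qed
  have P6: "\<forall>K. K < 0 \<and> y K > b^2 \<and> (\<forall>k<0. y k > b^2 \<longrightarrow> k \<le> K) \<longrightarrow>
        (\<forall>k\<le>K + 1. y k < y (k - 1)) \<and>
        (\<forall>c::real. (c = 2 * d * u^2 / 5
                  \<or> ((d, t, u) \<noteq> (5, 1, 1) \<and> c = 5 * d * u^2 / 8)
                  \<or> ((real_of_int t ^ 2 - real_of_int d * real_of_int u ^ 2) / 4 = 1 \<and> c = d * u^2)) \<longrightarrow>
          (\<forall>k<0. y k \<ge> Q * c ^ nat (max 0 (K - k))))"
  proof (intro allI impI)
    fix K :: int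
    assume HK: "K < 0 \<and> y K > b^2 \<and> (\<forall>k<0. y k > b^2 \<longrightarrow> k \<le> K)"
    have K0: "K < 0" and yK: "y K > real_of_int (b^2)"
      and Kmax: "\<forall>k<0. y k > real_of_int (b^2) \<longrightarrow> k \<le> K" using HK by auto
    have yK1: "y (K + 1) \<le> real_of_int (b^2)"
    proof (cases "K + 1 = 0")
      case True then show ?thesis using y0 by simp
    next
      case False
      then have "K + 1 < 0" using K0 by simp
      show ?thesis
      proof (rule ccontr)
        assume "\<not> ?thesis"
        then have "y (K + 1) > real_of_int (b^2)" by linarith
        then have "K + 1 \<le> K" using Kmax \<open>K + 1 < 0\<close> by blast
        then show False by simp
      qed
    qed
    have "y (K + 1) < y ((K + 1) - 1)" using yK1 yK by simp
    then have smallK: "A * (F (K + 1))^2 < B * \<eta>" using dec_iff[of "K + 1"] by simp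
    have K1: "\<forall>k\<le>K + 1. y k < y (k - 1)"
    proof (intro allI impI)
      fix k :: int assume "k \<le> K + 1"
      have "F k \<le> F (K + 1)" using Fmono[OF \<open>k \<le> K + 1\<close>] .
      then have "(F k)^2 \<le> (F (K + 1))^2" using Fpos[of k] by (intro power_mono) auto
      then have "A * (F k)^2 \<le> A * (F (K + 1))^2" using A0 by (intro mult_left_mono) auto
      then have "A * (F k)^2 < B * \<eta>" using smallK by linarith
      then show "y k < y (k - 1)" using dec_iff[of k] by simp
    qed
    have K2: "\<forall>c::real. (c = 2 * d * u^2 / 5
                  \<or> ((d, t, u) \<noteq> (5, 1, 1) \<and> c = 5 * d * u^2 / 8)
                  \<or> ((real_of_int t ^ 2 - real_of_int d * real_of_int u ^ 2) / 4 = 1 \<and> c = d * u^2)) \<longrightarrow>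
          (\<forall>k<0. y k \<ge> Q * c ^ nat (max 0 (K - k)))"
    proof (rule allI, rule impI)
      fix c :: real
      assume cond: "(c = 2 * d * u^2 / 5
                  \<or> ((d, t, u) \<noteq> (5, 1, 1) \<and> c = 5 * d * u^2 / 8)
                  \<or> ((real_of_int t ^ 2 - real_of_int d * real_of_int u ^ 2) / 4 = 1 \<and> c = d * u^2))"
      have cf: "0 \<le> c" "c \<le> \<eta> - 1 + 1 / \<eta>" using cfacts[OF cond] by auto
      have base: "y k \<ge> Q" if "k \<le> -1" for k
      proof (cases "k = -1")
        case True
        have Fm1: "F (-1) = inverse \<eta>" by (simp add: F_def)
        have "y (-1) = (A * inverse \<eta> + B * \<eta>) / (2 * s)" using yform[of "-1"] Fm1 by simp
        also have "A * inverse \<eta> + B * \<eta> = s * (real_of_int (b^2) * real_of_int T1 - real_of_int a * real_of_int t * real_of_int u)"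
          by (subst eta2, subst eta1, simp add: A_def B_def U1_def field_simps)
        finally have ym1: "y (-1) = (real_of_int (b^2) * real_of_int T1 - real_of_int a * real_of_int t * real_of_int u) / 2"
          using s0 by simp
        have T1r: "2 * real_of_int T1 = (real_of_int t)^2 + real_of_int d * (real_of_int u)^2"
          using rtsq by (simp add: T1_def m_def)
        have bpos: "(real_of_int b)^2 > 0" using pos by simp
        have "4 * (real_of_int b)^2 * Q = (real_of_int (b^4 * d) - real_of_int (a^2)) * (real_of_int u)^2"
          using bpos by (simp add: Qeq ABr)
        moreover have "4 * (real_of_int b)^2 * y (-1) = (real_of_int b)^4 * (2 * real_of_int T1)
            - 2 * real_of_int a * (real_of_int b)^2 * real_of_int t * real_of_int u"
          by (simp add: ym1 field_simps power2_eq_square power4_eq_xxxx)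
        ultimately have "4 * (real_of_int b)^2 * (y (-1) - Q)
            = (real_of_int (b^2) * real_of_int t - real_of_int a * real_of_int u)^2"
          unfolding T1r by (simp add: algebra_simps power2_eq_square power4_eq_xxxx)
        then have "4 * (real_of_int b)^2 * (y (-1) - Q) \<ge> 0" by simp
        then have "y (-1) - Q \<ge> 0" using bpos by (simp add: zero_le_mult_iff)
        then show ?thesis using True by simp
      next
        case False
        then have "k \<le> -2" using that by simp
        have "inverse (F k) = F (-k)" by (simp add: F_def power_int_minus)
        moreover have "F (-k) \<ge> F 2" using Fmono \<open>k \<le> -2\<close> by simp
        moreover have "F 2 = \<eta>^2" by (simp add: F_def)
        moreover have "\<eta>^2 \<ge> (real_of_int m / 2)^2" using eta_m m0 by (intro power_mono) auto
        moreover have "(real_of_int m / 2)^2 \<ge> real_of_int m"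
        proof -
          have "(real_of_int m / 2)^2 - real_of_int m = real_of_int m * (real_of_int m - 4) / 4"
            by (simp add: field_simps power2_eq_square)
          moreover have "real_of_int m * (real_of_int m - 4) \<ge> 0" using m5 by simp
          ultimately show ?thesis by simp
        qed
        ultimately have Gk: "inverse (F k) \<ge> real_of_int m" by linarith
        have "Q = A * B * (real_of_int u)^2 / (4 * (real_of_int b)^2)" by (rule Qeq)
        also have "\<dots> \<le> (2 * real_of_int (b^2) * s) * B * (real_of_int u)^2 / (4 * (real_of_int b)^2)"
          using A2 B0 pos by (intro divide_right_mono mult_right_mono) auto
        also have "\<dots> = B * real_of_int m / (2 * s)"
          using pos s0 by (simp add: rm field_simps power2_eq_square)
        also have "\<dots> \<le> B * inverse (F k) / (2 * s)"
          using Gk B0 s0 by (intro divide_right_mono mult_left_mono) auto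
        also have "\<dots> < y k"
        proof -
          have "A * F k > 0" using A0 Fpos[of k] by simp
          then have "B * inverse (F k) / (2* s) < (A * F k + B * inverse (F k)) / (2* s)"
            using s0 by (intro divide_strict_right_mono) auto
          then show ?thesis using yform[of k] by simp
        qed
        finally show ?thesis by simp
      qed
      have step: "c * y k \<le> y (k - 1)" if "k \<le> K" for k
      proof -
        have "F k * \<eta> = F (k + 1)" using Fsuc[of k] by simp
        moreover have "F (k + 1) \<le> F (K + 1)" using Fmono that by simp
        ultimately have "(F k * \<eta>)^2 \<le> (F (K + 1))^2"
          using Fpos[of k] Fpos[of "k + 1"] etapos by (intro power_mono) auto
        then have "A * (F k * \<eta>)^2 \<le> A * (F (K + 1))^2" using A0 by (intro mult_left_mono) auto
        moreover have "A * (F k * \<eta>)^2 = (A * (F k)^2 * \<eta>) * \<eta>"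
          by (simp add: power2_eq_square)
        ultimately have "(A * (F k)^2 * \<eta>) * \<eta> < B * \<eta>" using smallK by linarith
        then have sm: "A * (F k)^2 * \<eta> < B" using etapos by simp
        have "c * ((A * F k + B * inverse (F k)) / (2 * s))
              \<le> (A * (F k / \<eta>) + B * inverse (F k / \<eta>)) / (2 * s)"
          by (rule step_ge[OF A0 B0 Fpos s0 eta_gt1 sm cf])
        then show ?thesis unfolding yform[of k] yprev[of k] .
      qed
      have ind: "y (K - int n) \<ge> c^n * Q" for n
      proof (induction n)
        case 0 then show ?case using base[of K] K0 by simp
      next
        case (Suc n)
        have "c^Suc n * Q = c * (c^n * Q)" by simp
        also have "\<dots> \<le> c * y (K - int n)" using Suc cf(1) by (intro mult_left_mono) auto
        also have "\<dots> \<le> y (K - int n - 1)" using step[of "K - int n"] by simp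
        also have "K - int n - 1 = K - int (Suc n)" by simp
        finally show ?case .
      qed
      show "\<forall>k<0. y k \<ge> Q * c ^ nat (max 0 (K - k))"
      proof (intro allI impI)
        fix k :: int assume "k < 0"
        show "y k \<ge> Q * c ^ nat (max 0 (K - k))"
        proof (cases "K \<le> k")
          case True
          then have "nat (max 0 (K - k)) = 0" by simp
          then show ?thesis using base[of k] \<open>k < 0\<close> by simp
        next
          case False
          define n where "n = nat (K - k)"
          have 1: "K - int n = k" using False by (simp add: n_def)
          have 2: "nat (max 0 (K - k)) = n" using False by (simp add: n_def)
          show ?thesis using ind[of n] unfolding 1 2 by (simp add: mult.commute)
        qed
      qed
    qed
    show "(\<forall>k\<le>K + 1. y k < y (k - 1)) \<and>
        (\<forall>c::real. (c = 2 * d * u^2 / 5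
                  \<or> ((d, t, u) \<noteq> (5, 1, 1) \<and> c = 5 * d * u^2 / 8)
                  \<or> ((real_of_int t ^ 2 - real_of_int d * real_of_int u ^ 2) / 4 = 1 \<and> c = d * u^2)) \<longrightarrow>
          (\<forall>k<0. y k \<ge> Q * c ^ nat (max 0 (K - k))))" using K1 K2 by blast
  qed
  show ?thesis
    unfolding s_def[symmetric] e_def[symmetric] A_def[symmetric] Q_def[symmetric]
    using P1 P2 P3 P4 P5 P6 by blast
qed

end
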